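(* Let $F$ be a field of characteristic zero and $A$ a unital associative $F$-algebra with $A=F1\oplus N$ as vector spaces, where $N$ is a nilpotent ideal of index $m$ (i.e., $m$ is least with $N^m=0$). Let $R$ be a Rota–Baxter operator of weight zero on $A$. Then (a) $\mathrm{Im}\,R\subseteq N$; (b) $\mathrm{rb}(A)\le 2m-1$.
   Context: A linear operator $R$ on $A$ is a Rota–Baxter operator of weight $0$ if $R(x)R(y)=R(R(x)y+xR(y))$ for all $x,y\in A$. The RB-index $\mathrm{rb}(A)$ is the least $n\in\mathbb N$ such that $R^n=0$ for every Rota–Baxter operator $R$ of weight zero on $A$ ($\infty$ if no such $n$ exists). *)

theory Defs
  imports Main "HOL-Library.Extended_Nat"
begin

definition unital_algebra :: "('f::field \<Rightarrow> 'a::ring_1 \<Rightarrow> 'a) \<Rightarrow> bool" where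
  "unital_algebra smult \<longleftrightarrow> vector_space smult \<and>
     (\<forall>c x y. smult c (x * y) = smult c x * y \<and> smult c (x * y) = x * smult c y)"

definition alg_ideal :: "('f::field \<Rightarrow> 'a::ring_1 \<Rightarrow> 'a) \<Rightarrow> 'a set \<Rightarrow> bool" where
  "alg_ideal smult N \<longleftrightarrow> module.subspace smult N \<and>
     (\<forall>a\<in>N. \<forall>x. x * a \<in> N \<and> a * x \<in> N)"

text \<open>N^k = 0, i.e. every product of k elements of N vanishes.\<close>
definition power_zero :: "'a::ring_1 set \<Rightarrow> nat \<Rightarrow> bool" where
  "power_zero N k \<longleftrightarrow> (\<forall>xs. length xs = k \<and> set xs \<subseteq> N \<longrightarrow> prod_list xs = 0)"

definition nilpotent_index :: "'a::ring_1 set \<Rightarrow> nat \<Rightarrow> bool" where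
  "nilpotent_index N m \<longleftrightarrow> power_zero N m \<and> (\<forall>k<m. \<not> power_zero N k)"

definition rota_baxter0 :: "('f::field \<Rightarrow> 'a::ring_1 \<Rightarrow> 'a) \<Rightarrow> ('a \<Rightarrow> 'a) \<Rightarrow> bool" where
  "rota_baxter0 smult R \<longleftrightarrow> Vector_Spaces.linear smult smult R \<and>
     (\<forall>x y. R x * R y = R (R x * y + x * R y))"

definition rb_index :: "('f::field \<Rightarrow> 'a::ring_1 \<Rightarrow> 'a) \<Rightarrow> enat" where
  "rb_index smult =
     (if \<exists>n. \<forall>R. rota_baxter0 smult R \<longrightarrow> (R ^^ n) = (\<lambda>_. 0)
      then enat (LEAST n. \<forall>R. rota_baxter0 smult R \<longrightarrow> (R ^^ n) = (\<lambda>_. 0))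
      else \<infinity>)"

end

theory Submission
  imports Defs
begin

locale rbsetup =
  fixes smult :: "'f::field_char_0 \<Rightarrow> 'a::ring_1 \<Rightarrow> 'a"
    and N :: "'a set" and m :: nat
  assumes alg: "unital_algebra smult"
    and idl: "alg_ideal smult N"
    and dec: "\<forall>a. \<exists>!(c, n). n \<in> N \<and> a = smult c 1 + n"
    and nil: "nilpotent_index N m"
begin

sublocale vs: vector_space smult
  using alg unfolding unital_algebra_def by blast

lemma sm_l: "smult c (x * y) = smult c x * y" and sm_r: "smult c (x * y) = x * smult c y"
  using alg unfolding unital_algebra_def by blast+

lemma N0: "0 \<in> N" and Nadd: "x \<in> N \<Longrightarrow> y \<in> N \<Longrightarrow> x + y \<in> N"
  and Nsc: "x \<in> N \<Longrightarrow> smult c x \<in> N"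
  and Nml: "x \<in> N \<Longrightarrow> y * x \<in> N" and Nmr: "x \<in> N \<Longrightarrow> x * y \<in> N"
  using idl unfolding alg_ideal_def vs.subspace_def by blast+

lemma uniq: "n1 \<in> N \<Longrightarrow> n2 \<in> N \<Longrightarrow> smult c 1 + n1 = smult d 1 + n2 \<Longrightarrow> c = d"
proof -
  assume h: "n1 \<in> N" "n2 \<in> N" "smult c 1 + n1 = smult d 1 + n2"
  from dec have "\<exists>!(c', n). n \<in> N \<and> smult c 1 + n1 = smult c' 1 + n" by blast
  then have u: "\<exists>!p. (case p of (c', n) \<Rightarrow> n \<in> N \<and> smult c 1 + n1 = smult c' 1 + n)" by simp
  have e1: "(THE p. (case p of (c', n) \<Rightarrow> n \<in> N \<and> smult c 1 + n1 = smult c' 1 + n)) = (c, n1)"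
    by (rule the1_equality[OF u]) (simp add: h)
  have e2: "(THE p. (case p of (c', n) \<Rightarrow> n \<in> N \<and> smult c 1 + n1 = smult c' 1 + n)) = (d, n2)"
    by (rule the1_equality[OF u]) (simp add: h)
  from e1 e2 have "(c, n1) = (d, n2)" by simp
  then show ?thesis by simp
qed

lemma decomp: "\<exists>c n. n \<in> N \<and> a = smult c 1 + n"
  using dec by blast

lemma pz: "length xs \<ge> m \<Longrightarrow> set xs \<subseteq> N \<Longrightarrow> prod_list xs = 0"
proof -
  assume h: "length xs \<ge> m" "set xs \<subseteq> N"
  have "prod_list (take m xs) = 0"
    using nil h unfolding nilpotent_index_def power_zero_def
    by (metis length_take min.absorb2 order.trans set_take_subset)
  then show ?thesis by (metis append_take_drop_id mult_zero_left prod_list.append)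
qed

lemma m_pos: "m \<ge> 1"
  using nil unfolding nilpotent_index_def power_zero_def by (cases m) auto


context
  fixes R :: "'a \<Rightarrow> 'a"
  assumes rb: "rota_baxter0 smult R"
begin

lemma Radd: "R (x + y) = R x + R y" and Rsc: "R (smult c x) = smult c (R x)"
  and RB: "R x * R y = R (R x * y + x * R y)"
  using rb unfolding rota_baxter0_def Vector_Spaces.linear_iff by blast+

lemma R0: "R 0 = 0"
  using Rsc[of 0 0] by simp

lemma sm1l: "smult c 1 * x = smult c x"
  using sm_l[of c 1 x] by simp
lemma sm1r: "x * smult c 1 = smult c x"
  using sm_r[of c x 1] by simp

lemma key:
  assumes h1: "\<And>v. v \<in> N \<Longrightarrow> R (v * p) \<in> N" and h2: "\<And>v. v \<in> N \<Longrightarrow> R (p * v) \<in> N"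
  shows "R p \<in> N"
proof -
  obtain c n where n: "n \<in> N" "R p = smult c 1 + n" using decomp by blast
  have lhs: "R p * R p = smult (c*c) 1 + (smult c n + smult c n + n*n)"
    unfolding n(2) by (simp add: distrib_left distrib_right sm1l sm1r add.assoc vs.scale_right_distrib)
  have a1: "R p * p + p * R p = smult c p + smult c p + (n*p + p*n)"
    unfolding n(2) by (simp add: distrib_left distrib_right sm1l sm1r algebra_simps)
  have rhs: "R (R p * p + p * R p) = smult (c*c) 1 + smult (c*c) 1 + (smult c n + smult c n + (R (n*p) + R (p*n)))"
  proof -
    have "R (R p * p + p * R p) = smult c (R p) + smult c (R p) + (R (n*p) + R (p*n))"
      unfolding a1 by (simp only: Radd Rsc)
    also have "\<dots> = smult (c*c) 1 + smult (c*c) 1 + (smult c n + smult c n + (R (n*p) + R (p*n)))"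
      unfolding n(2) by (simp add: vs.scale_right_distrib algebra_simps)
    finally show ?thesis .
  qed
  have s2: "smult (c*c) 1 + smult (c*c) 1 = smult (c*c + c*c) (1::'a)"
    by (rule vs.scale_left_distrib[symmetric])
  have nn: "smult c n + smult c n + n*n \<in> N" using n(1) by (intro Nadd Nsc Nml)
  have nn2: "smult c n + smult c n + (R (n*p) + R (p*n)) \<in> N"
    using n(1) h1 h2 by (intro Nadd Nsc)
  have eq: "smult (c*c) 1 + (smult c n + smult c n + n*n)
      = smult (c*c + c*c) 1 + (smult c n + smult c n + (R (n*p) + R (p*n)))"
    using lhs rhs RB[of p p] s2 by (metis add.assoc)
  have "c*c = c*c + c*c" by (rule uniq[OF nn nn2 eq])
  then have "c = 0" by simp
  then show ?thesis using n by simp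
qed


lemma Rdiff: "R (x - y) = R x - R y"
  using Radd[of "x - y" y] by (simp add: eq_diff_eq)

lemma listN: "\<forall>xs. xs \<noteq> [] \<longrightarrow> set xs \<subseteq> N \<longrightarrow> length xs + k \<ge> m \<longrightarrow> R (prod_list xs) \<in> N"
proof (induction k)
  case 0
  then show ?case using pz R0 N0 by simp
next
  case (Suc k)
  show ?case
  proof (intro allI impI)
    fix xs :: "'a list" assume h: "xs \<noteq> []" "set xs \<subseteq> N" "m \<le> length xs + Suc k"
    show "R (prod_list xs) \<in> N"
    proof (rule key)
      fix v assume v: "v \<in> N"
      have "R (prod_list (v # xs)) \<in> N" using Suc.IH[rule_format, of "v # xs"] h v by simp
      then show "R (v * prod_list xs) \<in> N" by simp
      have "R (prod_list (xs @ [v])) \<in> N" using Suc.IH[rule_format, of "xs @ [v]"] h v by simp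
      then show "R (prod_list xs * v) \<in> N" by simp
    qed
  qed
qed

lemma RN: "x \<in> N \<Longrightarrow> R x \<in> N"
  using listN[of m] by (metis empty_set empty_subsetI insert_subset le_add2 list.distinct(1) list.simps(15) prod_list.Cons mult_1_right prod_list.Nil)

lemma R1: "R 1 \<in> N"
  by (rule key) (simp_all add: RN)

lemma range_N: "R x \<in> N"
proof -
  obtain c n where n: "n \<in> N" "x = smult c 1 + n" using decomp by blast
  have "R x = smult c (R 1) + R n" unfolding n(2) by (simp add: Radd Rsc)
  then show ?thesis using R1 RN n(1) by (simp add: Nadd Nsc)
qed

lemma comm1: "R 1 * R y = R (R 1 * y) + R (R y)"
  using RB[of 1 y] by (simp add: Radd)

lemma smS: "smult (of_nat (Suc k)) z = smult (of_nat k) z + z"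
  by (simp add: vs.scale_left_distrib add.commute)

lemma comm: "R 1 * (R ^^ Suc n) y - (R ^^ Suc n) (R 1 * y) = smult (of_nat (Suc n)) ((R ^^ Suc (Suc n)) y)"
proof (induction n)
  case 0
  then show ?case using comm1[of y] by simp
next
  case (Suc n)
  let ?z = "(R ^^ Suc n) y"
  have "R 1 * (R ^^ Suc (Suc n)) y - (R ^^ Suc (Suc n)) (R 1 * y)
      = R 1 * R ?z - R ((R ^^ Suc n) (R 1 * y))" by simp
  also have "\<dots> = R (R 1 * ?z - (R ^^ Suc n) (R 1 * y)) + R (R ?z)"
    using comm1[of ?z] by (simp add: Rdiff)
  also have "\<dots> = smult (of_nat (Suc n)) ((R ^^ Suc (Suc (Suc n))) y) + (R ^^ Suc (Suc (Suc n))) y"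
    using Suc.IH by (simp add: Rsc)
  also have "\<dots> = smult (of_nat (Suc (Suc n))) ((R ^^ Suc (Suc (Suc n))) y)"
    by (rule smS[symmetric])
  finally show ?case .
qed

lemma powN: "R 1 ^ j = prod_list (replicate j (R 1))"
  by (simp add: prod_list_replicate)

lemma G: "\<forall>i j x. i + j + Suc n \<ge> 2*m - 1 \<longrightarrow> R 1 ^ i * (R ^^ Suc n) (R 1 ^ j * x) = 0"
proof (induction n)
  case 0
  show ?case
  proof (intro allI impI)
    fix i j x assume h: "2 * m - 1 \<le> i + j + Suc 0"
    show "R 1 ^ i * (R ^^ Suc 0) (R 1 ^ j * x) = 0"
    proof (cases "j \<ge> m")
      case True
      have "R 1 ^ j = 0" unfolding powN using True R1 by (intro pz) auto
      then show ?thesis by (simp add: R0)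
    next
      case False
      then have "i + 1 \<ge> m" using h by linarith
      have "prod_list (replicate i (R 1) @ [R (R 1 ^ j * x)]) = 0"
        using \<open>i + 1 \<ge> m\<close> R1 range_N by (intro pz) auto
      then show ?thesis by (simp add: prod_list_replicate)
    qed
  qed
next
  case (Suc n)
  show ?case
  proof (intro allI impI)
    fix i j x assume h: "2 * m - 1 \<le> i + j + Suc (Suc n)"
    let ?w = "R 1 ^ i * (R ^^ Suc (Suc n)) (R 1 ^ j * x)"
    have ha: "2*m-1 \<le> Suc i + j + Suc n" and hb: "2*m-1 \<le> i + Suc j + Suc n" using h by simp_all
    have a: "R 1 ^ Suc i * (R ^^ Suc n) (R 1 ^ j * x) = 0" using Suc.IH[rule_format, OF ha] .
    have b: "R 1 ^ i * (R ^^ Suc n) (R 1 ^ Suc j * x) = 0" using Suc.IH[rule_format, OF hb] .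
    have "smult (of_nat (Suc n)) ?w = R 1 ^ i * smult (of_nat (Suc n)) ((R ^^ Suc (Suc n)) (R 1 ^ j * x))"
      by (rule sm_r)
    also have "\<dots> = R 1 ^ i * (R 1 * (R ^^ Suc n) (R 1 ^ j * x) - (R ^^ Suc n) (R 1 * (R 1 ^ j * x)))"
      by (simp only: comm)
    also have "\<dots> = R 1 ^ Suc i * (R ^^ Suc n) (R 1 ^ j * x) - R 1 ^ i * (R ^^ Suc n) (R 1 ^ Suc j * x)"
    proof -
      have p1: "\<And>z. R 1 ^ i * (R 1 * z) = R 1 ^ Suc i * z"
        by (simp only: mult.assoc[symmetric] power_Suc2)
      have p2: "R 1 * (R 1 ^ j * x) = R 1 ^ Suc j * x"
        by (simp only: mult.assoc[symmetric] power_Suc)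
      show ?thesis by (simp only: right_diff_distrib p1 p2)
    qed
    also have "\<dots> = 0" unfolding a b by simp
    finally have "smult (of_nat (Suc n)) ?w = 0" .
    moreover have "(of_nat (Suc n)::'f) \<noteq> 0" by (simp only: of_nat_eq_0_iff)
    ultimately show "?w = 0" using vs.scale_eq_0_iff by blast
  qed
qed

lemma nilp: "(R ^^ (2*m - 1)) = (\<lambda>_. 0)"
proof
  fix x
  have e: "2*m - 1 = Suc (2*m - 2)" using m_pos by linarith
  show "(R ^^ (2*m - 1)) x = 0"
    using G[of "2*m-2"] unfolding e by (metis mult_1 power_0 le_add2)
qed

end

end


theorem theorem14:
  fixes smult :: "'f::field_char_0 \<Rightarrow> 'a::ring_1 \<Rightarrow> 'a"
    and N :: "'a set" and m :: nat and R :: "'a \<Rightarrow> 'a"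
  assumes "unital_algebra smult"
    and "alg_ideal smult N"
    and "\<forall>a. \<exists>!(c, n). n \<in> N \<and> a = smult c 1 + n"
    and "nilpotent_index N m"
    and "rota_baxter0 smult R"
  shows "range R \<subseteq> N \<and> rb_index smult \<le> enat (2 * m - 1)"
proof -
  interpret rbsetup smult N m using assms(1-4) by unfold_locales
  have a: "range R \<subseteq> N" using range_N[OF assms(5)] by blast
  have all: "\<forall>R'. rota_baxter0 smult R' \<longrightarrow> (R' ^^ (2*m-1)) = (\<lambda>_. 0)"
    using nilp by blast
  then have "rb_index smult = enat (LEAST n. \<forall>R. rota_baxter0 smult R \<longrightarrow> (R ^^ n) = (\<lambda>_. 0))"
    unfolding rb_index_def by auto
  also have "\<dots> \<le> enat (2*m-1)" using Least_le[of "\<lambda>n. \<forall>R. rota_baxter0 smult R \<longrightarrow> (R ^^ n) = (\<lambda>_. 0)" "2*m-1", OF all] by simp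
  finally show ?thesis using a by simp
qed

end
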